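(* Let $k,t \geq 2$ be integers and $1 \leq r \leq t$. If $z = \eta + iy$ with $\eta > 0$ and $q=e^{-z}$, then \[ |L_k^\times(r,t;q)| \leq \frac{e^{\eta}}{\eta^2}. \]
   Context: $L_k^\times(r,t;q) \coloneqq \sum_{m\ge1,\ k\nmid m,\ m\equiv r \pmod t} \frac{q^m}{1-q^m}$. *)

theory Defs
  imports "HOL-Analysis.Analysis"
begin

definition L_cross :: "nat \<Rightarrow> nat \<Rightarrow> nat \<Rightarrow> complex \<Rightarrow> complex" where
  "L_cross k r t q =
     infsum (\<lambda>m::nat. q ^ m / (1 - q ^ m))
       {m. m \<ge> 1 \<and> \<not> k dvd m \<and> m mod t = r mod t}"

end

theory Submission
  imports Defs
begin

theorem lemma3p9:
  fixes k t r :: nat and \<eta> y :: real and z q :: complex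
  assumes "k \<ge> 2" and "t \<ge> 2" and "1 \<le> r" and "r \<le> t"
    and "\<eta> > 0" and "z = Complex \<eta> y" and "q = exp (- z)"
  shows "norm (L_cross k r t q) \<le> exp \<eta> / \<eta> ^ 2"
proof -
  define a where "a = exp (- \<eta>)"
  define S where "S = {m::nat. m \<ge> 1 \<and> \<not> k dvd m \<and> m mod t = r mod t}"
  define f where "f = (\<lambda>m::nat. q ^ m / (1 - q ^ m))"
  define h where "h = (\<lambda>m::nat. if m = 0 then 0 else a ^ m / (1 - a))"
  have a0: "0 < a" and a1: "a < 1" using assms(5) by (auto simp: a_def)
  have nq: "norm q = a" using assms(6,7) by (simp add: a_def norm_exp_eq_Re)
  have bnd: "norm (f m) \<le> h m" if "m \<ge> 1" for m
  proof -
    have am: "a ^ m \<le> a" using power_decreasing[of 1 m a] a0 a1 that by simp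
    have "norm (1 - q ^ m) \<ge> 1 - norm (q ^ m)" by (metis norm_one norm_triangle_ineq2)
    hence d: "norm (1 - q ^ m) \<ge> 1 - a" using am by (simp add: norm_power nq)
    have "norm (f m) = a ^ m / norm (1 - q ^ m)" by (simp add: f_def norm_divide norm_power nq)
    also have "\<dots> \<le> a ^ m / (1 - a)"
      using d a1 a0 by (intro divide_left_mono) (auto intro!: mult_pos_pos)
    finally show ?thesis using that by (simp add: h_def)
  qed
  have hs: "h sums (a / (1 - a)^2)"
  proof -
    have "(\<lambda>n. a / (1 - a) * a ^ n) sums (a / (1 - a) * (1 / (1 - a)))"
      using geometric_sums[of a] a0 a1 by (intro sums_mult) auto
    hence "(\<lambda>n. h (Suc n)) sums (a / (1 - a)^2)"
      by (simp add: h_def power2_eq_square field_simps)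
    thus ?thesis using sums_Suc_iff[of h "a / (1 - a)^2"] by (simp add: h_def)
  qed
  have hnn: "h m \<ge> 0" for m using a0 a1 by (simp add: h_def)
  have hU: "(h has_sum (a / (1 - a)^2)) UNIV"
    using hs hnn by (intro sums_nonneg_imp_has_sum) auto
  have hS: "h summable_on S"
    by (rule summable_on_subset_banach[of _ UNIV]) (use hU in \<open>auto simp: summable_on_def\<close>)
  have "(\<lambda>x. norm (h x)) summable_on S" using hS hnn by simp
  hence fa: "(\<lambda>x. norm (f x)) summable_on S"
    by (rule Infinite_Sum.abs_summable_on_comparison_test) (use bnd hnn in \<open>auto simp: S_def\<close>)
  hence fS: "f summable_on S" by (rule Infinite_Sum.abs_summable_summable)
  have "norm (L_cross k r t q) = norm (infsum f S)" by (simp add: L_cross_def f_def S_def)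
  also have "\<dots> \<le> infsum h S"
    by (rule norm_infsum_le[OF has_sum_infsum[OF fS] has_sum_infsum[OF hS]]) (use bnd in \<open>auto simp: S_def\<close>)
  also have "\<dots> \<le> infsum h UNIV"
    by (rule infsum_mono_neutral) (use hS hU hnn in \<open>auto simp: summable_on_def\<close>)
  also have "\<dots> = a / (1 - a)^2" using hU by (rule infsumI)
  also have "\<dots> \<le> exp \<eta> / \<eta> ^ 2"
  proof -
    have e: "exp \<eta> * a = 1" by (simp add: a_def exp_minus field_simps)
    have "exp \<eta> - 1 \<ge> \<eta>" using exp_ge_add_one_self[of \<eta>] by linarith
    hence "a * (exp \<eta> - 1) \<ge> a * \<eta>" using a0 by (intro mult_left_mono) auto
    hence l: "1 - a \<ge> \<eta> * a" using e by (simp add: algebra_simps)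
    have "(\<eta> * a)^2 \<le> (1 - a)^2" using l assms(5) a0 by (intro power_mono) auto
    hence "a / (1 - a)^2 \<le> a / (\<eta> * a)^2" using assms(5) a0 a1
      by (intro divide_left_mono) (auto intro!: mult_pos_pos)
    also have "\<dots> = exp \<eta> / \<eta>^2" using e a0 assms(5) by (simp add: power2_eq_square field_simps)
    finally show ?thesis .
  qed
  finally show ?thesis .
qed

end
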